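(* Let $\alpha>0$, $\beta,\eta,\kappa\in\mathbb{R}$, $\rho>0$, $p\geq 1$, and $0\le a<x$. Let $f,g$ be two positive functions on $[0,\infty)$ with $f,g\in X^{p}_{c}(a,x)$ (for some $c\in\mathbb{R}$), such that ${}^{\rho}\mathcal{I}^{\alpha,\beta}_{a+,\eta,\kappa}f^{p}(x)<\infty$ and ${}^{\rho}\mathcal{I}^{\alpha,\beta}_{a+,\eta,\kappa}g^{p}(x)<\infty$. Suppose there are real numbers $m,M>0$ with $0<m\leq \frac{f(t)}{g(t)}\leq M$ for all $t\in[a,x]$. Define, for $t\in[a,x]$, $$h(f(t),g(t))=\max\left\{M\left[\left(\frac{M}{m}+1\right)f(t)-Mg(t)\right],\ \frac{(m+M)g(t)-f(t)}{m}\right\}.$$ Then $$\left({}^{\rho}\mathcal{I}^{\alpha,\beta}_{a+,\eta,\kappa}f^{p}(x)\right)^{1/p}+\left({}^{\rho}\mathcal{I}^{\alpha,\beta}_{a+,\eta,\kappa}g^{p}(x)\right)^{1/p}\leq 2\left({}^{\rho}\mathcal{I}^{\alpha,\beta}_{a+,\eta,\kappa}h^{p}(f,g)(x)\right)^{1/p}.$$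
   Context: For $c\in\mathbb{R}$ and $1\le p<\infty$, $X^{p}_{c}(a,b)$ denotes the space of Lebesgue measurable functions $f$ on $(a,b)$ with $\left(\int_a^b |t^{c}f(t)|^{p}\,\frac{dt}{t}\right)^{1/p}<\infty$. For $\alpha>0$, $\beta,\eta,\kappa\in\mathbb{R}$, $\rho>0$, $0\le a<x$, and a function $\varphi$, the generalized (Katugampola) fractional integral is $${}^{\rho}\mathcal{I}^{\alpha,\beta}_{a+,\eta,\kappa}\varphi(x)=\frac{\rho^{1-\beta}x^{\kappa}}{\Gamma(\alpha)}\int_{a}^{x}\frac{\tau^{\rho(\eta+1)-1}}{(x^{\rho}-\tau^{\rho})^{1-\alpha}}\varphi(\tau)\,d\tau,$$ whenever the integral exists. ${}^{\rho}\mathcal{I}^{\alpha,\beta}_{a+,\eta,\kappa}h^{p}(f,g)(x)$ denotes the operator applied to $\tau\mapsto h(f(\tau),g(\tau))^p$, evaluated at $x$. *)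

theory Defs
  imports "HOL-Analysis.Analysis"
begin

definition Xpc :: "real \<Rightarrow> real \<Rightarrow> real \<Rightarrow> real \<Rightarrow> (real \<Rightarrow> real) \<Rightarrow> bool" where
  "Xpc c p a b f \<longleftrightarrow>
     set_borel_measurable lebesgue {a<..<b} f \<and>
     (\<integral>\<^sup>+ t \<in> {a<..<b}. ennreal (\<bar>t powr c * f t\<bar> powr p / t) \<partial>lebesgue) < \<infinity>"

definition katu_kernel :: "real \<Rightarrow> real \<Rightarrow> real \<Rightarrow> real \<Rightarrow> real \<Rightarrow> real" where
  "katu_kernel \<rho> \<alpha> \<eta> x \<tau> =
     \<tau> powr (\<rho> * (\<eta> + 1) - 1) / (x powr \<rho> - \<tau> powr \<rho>) powr (1 - \<alpha>)"

definition katu_exists :: "real \<Rightarrow> real \<Rightarrow> real \<Rightarrow> real \<Rightarrow> (real \<Rightarrow> real) \<Rightarrow> real \<Rightarrow> bool" where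
  "katu_exists \<rho> \<alpha> \<eta> a \<phi> x \<longleftrightarrow>
     set_integrable lebesgue {a..x} (\<lambda>\<tau>. katu_kernel \<rho> \<alpha> \<eta> x \<tau> * \<phi> \<tau>)"

text \<open>Generalized (Katugampola) fractional integral
  rho-I^{alpha,beta}_{a+,eta,kappa} phi (x).\<close>
definition katu_int :: "real \<Rightarrow> real \<Rightarrow> real \<Rightarrow> real \<Rightarrow> real \<Rightarrow> real \<Rightarrow> (real \<Rightarrow> real) \<Rightarrow> real \<Rightarrow> real" where
  "katu_int \<rho> \<alpha> \<beta> \<eta> \<kappa> a \<phi> x =
     \<rho> powr (1 - \<beta>) * x powr \<kappa> / Gamma \<alpha> *
     (\<integral>\<tau>\<in>{a..x}. katu_kernel \<rho> \<alpha> \<eta> x \<tau> * \<phi> \<tau> \<partial>lebesgue)"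

end

theory Submission
  imports Defs
begin

lemma pw:
  fixes u v m M :: real
  assumes "u > 0" "v > 0" "m > 0" "M > 0" "m \<le> u / v" "u / v \<le> M"
  defines "H \<equiv> max (M * ((M / m + 1) * u - M * v)) (((m + M) * v - u) / m)"
  shows "u \<le> H" "v \<le> H" "H \<le> max (M*(M/m+1)) ((m+M)/m^2) * u"
proof -
  have a: "m * v \<le> u" "u \<le> M * v" using assms by (auto simp: field_simps)
  show "v \<le> H"
  proof -
    have "v \<le> ((m + M) * v - u) / m" using a assms by (simp add: field_simps)
    thus ?thesis unfolding H_def by simp
  qed
  show "u \<le> H"
  proof (cases "M \<ge> 1")
    case True
    have "u \<le> M * ((M / m + 1) * u - M * v)"
    proof -
      have e: "M * M * v = (M * M / m) * (m * v)" using assms by (simp add: field_simps)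
      have "(M * M / m) * (m * v) \<le> (M * M / m) * u" using a assms by (intro mult_left_mono) auto
      hence "M * M * v \<le> (M * M / m) * u" using e by simp
      moreover have "u \<le> M * u" using True assms by simp
      ultimately show ?thesis by (simp add: algebra_simps)
    qed
    thus ?thesis unfolding H_def by simp
  next
    case False
    have "u \<le> ((m + M) * v - u) / m"
    proof -
      have "u \<le> M * v" using a by simp
      have "m * u \<le> m * v" using a False assms
        by (smt (verit) mult_left_mono mult_less_cancel_right2)
      hence "m * u + u \<le> m * v + M * v" using a by linarith
      thus ?thesis using assms by (simp add: field_simps)
    qed
    thus ?thesis unfolding H_def by simp
  qed
  show "H \<le> max (M*(M/m+1)) ((m+M)/m^2) * u"
  proof -
    have 1: "M * ((M / m + 1) * u - M * v) \<le> M*(M/m+1) * u"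
      using assms by (simp add: algebra_simps)
    have "v \<le> u/m" using a assms by (simp add: field_simps)
    hence "(m+M)* v \<le> (m+M)*(u/m)" using assms by (intro mult_left_mono) auto
    hence "((m + M) * v - u) / m \<le> (m+M)*(u/m) / m"
      using assms by (intro divide_right_mono) auto
    also have "\<dots> = (m+M)/m^2 * u" by (simp add: power2_eq_square)
    finally have 2: "((m + M) * v - u) / m \<le> (m+M)/m^2 * u" .
    have "M*(M/m+1) * u \<le> max (M*(M/m+1)) ((m+M)/m^2) * u"
      "(m+M)/m^2 * u \<le> max (M*(M/m+1)) ((m+M)/m^2) * u"
      using assms by (intro mult_right_mono; simp)+
    thus ?thesis using 1 2 unfolding H_def by linarith
  qed
qed

theorem theorem15:
  fixes \<alpha> \<beta> \<eta> \<kappa> \<rho> p a x c m M :: real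
    and f g :: "real \<Rightarrow> real"
  assumes "\<alpha> > 0" and "\<rho> > 0" and "p \<ge> 1" and "0 \<le> a" and "a < x"
    and "\<And>t. t \<ge> 0 \<Longrightarrow> f t > 0" and "\<And>t. t \<ge> 0 \<Longrightarrow> g t > 0"
    and "Xpc c p a x f" and "Xpc c p a x g"
    and "katu_exists \<rho> \<alpha> \<eta> a (\<lambda>t. f t powr p) x"
    and "katu_exists \<rho> \<alpha> \<eta> a (\<lambda>t. g t powr p) x"
    and "m > 0" and "M > 0"
    and "\<And>t. t \<in> {a..x} \<Longrightarrow> m \<le> f t / g t \<and> f t / g t \<le> M"
  shows "let h = (\<lambda>t. max (M * ((M / m + 1) * f t - M * g t)) (((m + M) * g t - f t) / m)) in
     (katu_int \<rho> \<alpha> \<beta> \<eta> \<kappa> a (\<lambda>t. f t powr p) x) powr (1 / p)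
     + (katu_int \<rho> \<alpha> \<beta> \<eta> \<kappa> a (\<lambda>t. g t powr p) x) powr (1 / p)
     \<le> 2 * (katu_int \<rho> \<alpha> \<beta> \<eta> \<kappa> a (\<lambda>t. h t powr p) x) powr (1 / p)"
  proof -
  define S where "S = {a..x}"
  define k where "k = katu_kernel \<rho> \<alpha> \<eta> x"
  define Hf where "Hf = (\<lambda>u v. max (M * ((M / m + 1) * u - M * v)) (((m + M) * v - u) / m))"
  define K where "K = max (M*(M/m+1)) ((m+M)/m^2)"
  have pos: "f t > 0" "g t > 0" if "t \<in> S" for t using that assms(4,6,7) by (auto simp: S_def)
  have rat: "m \<le> f t / g t" "f t / g t \<le> M" if "t \<in> S" for t using that assms(14) by (auto simp: S_def)
  have hf: "f t \<le> Hf (f t) (g t)" "g t \<le> Hf (f t) (g t)" "Hf (f t) (g t) \<le> K * f t" if "t \<in> S" for t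
    using pw[OF pos(1)[OF that] pos(2)[OF that] assms(12,13) rat[OF that]] unfolding Hf_def K_def by auto
  have kpos: "k t \<ge> 0" if "t \<in> S" for t
    using that assms(4) unfolding k_def katu_kernel_def S_def by auto
  have meas_cl: "(\<lambda>t. indicator S t * \<phi> t) \<in> borel_measurable lebesgue"
    if "Xpc c p a x \<phi>" for \<phi>
  proof -
    have m0: "(\<lambda>t. indicator {a<..<x} t *\<^sub>R \<phi> t) \<in> borel_measurable lebesgue"
      using that unfolding Xpc_def set_borel_measurable_def by auto
    have "(\<lambda>t. indicator S t * \<phi> t) = (\<lambda>t. indicator {a<..<x} t *\<^sub>R \<phi> t + indicator {a} t * \<phi> a + indicator {x} t * \<phi> x)"
      using assms(5) by (auto simp: S_def indicator_def fun_eq_iff)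
    also have "\<dots> \<in> borel_measurable lebesgue" using m0 by (intro borel_measurable_add borel_measurable_times borel_measurable_indicator) auto
    finally show ?thesis .
  qed
  define F where "F = (\<lambda>t. indicator S t * f t)"
  define G where "G = (\<lambda>t. indicator S t * g t)"
  have Fm: "F \<in> borel_measurable lebesgue" using meas_cl[OF assms(8)] by (simp add: F_def)
  have Gm: "G \<in> borel_measurable lebesgue" using meas_cl[OF assms(9)] by (simp add: G_def)
  have kb: "k \<in> borel_measurable borel" unfolding k_def katu_kernel_def by measurable
  have km: "k \<in> borel_measurable lebesgue"
    using measurable_compose[OF id_borel_measurable_lebesgue kb] by (simp add: o_def)
  have If: "set_integrable lebesgue S (\<lambda>t. k t * f t powr p)"
    using assms(10) unfolding katu_exists_def k_def S_def .
  have Ig: "set_integrable lebesgue S (\<lambda>t. k t * g t powr p)"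
    using assms(11) unfolding katu_exists_def k_def S_def .
  have Ih: "set_integrable lebesgue S (\<lambda>t. k t * Hf (f t) (g t) powr p)"
  proof (rule set_integrable_bound[where f="\<lambda>t. K powr p * (k t * f t powr p)"])
    show "set_integrable lebesgue S (\<lambda>t. K powr p * (k t * f t powr p))"
      using If by simp
    have "(\<lambda>t. indicator S t *\<^sub>R (k t * Hf (f t) (g t) powr p)) =
        (\<lambda>t. indicator S t * (k t * Hf (F t) (G t) powr p))"
      by (auto simp: F_def G_def indicator_def fun_eq_iff)
    also have "\<dots> \<in> borel_measurable lebesgue" unfolding Hf_def
      by (intro borel_measurable_times borel_measurable_indicator km powr_real_measurable borel_measurable_max
            borel_measurable_add borel_measurable_diff borel_measurable_divide Fm Gm borel_measurable_const) (auto simp: S_def)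
    finally show "set_borel_measurable lebesgue S (\<lambda>t. k t * Hf (f t) (g t) powr p)"
      unfolding set_borel_measurable_def .
    show "AE t in lebesgue. t \<in> S \<longrightarrow> norm (k t * Hf (f t) (g t) powr p) \<le> norm (K powr p * (k t * f t powr p))"
    proof (rule AE_I2, intro impI)
      fix t assume t: "t \<in> S"
      have h0: "0 \<le> Hf (f t) (g t)" using hf(1)[OF t] pos(1)[OF t] by linarith
      have "Hf (f t) (g t) powr p \<le> (K * f t) powr p"
        using hf(3)[OF t] h0 assms(3) by (intro powr_mono2) auto
      also have "\<dots> = K powr p * f t powr p"
        using hf(3)[OF t] h0 pos(1)[OF t] by (intro powr_mult; auto simp: zero_le_mult_iff)
      finally have "k t * Hf (f t) (g t) powr p \<le> k t * (K powr p * f t powr p)"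
        using kpos[OF t] by (intro mult_left_mono) auto
      thus "norm (k t * Hf (f t) (g t) powr p) \<le> norm (K powr p * (k t * f t powr p))"
        using kpos[OF t] by (simp add: abs_of_nonneg mult_ac)
    qed
  qed
  define C where "C = \<rho> powr (1 - \<beta>) * x powr \<kappa> / Gamma \<alpha>"
  have Cpos: "C > 0" unfolding C_def using assms(1,2,4,5) by auto
  have KI: "katu_int \<rho> \<alpha> \<beta> \<eta> \<kappa> a \<phi> x = C * (LINT t:S|lebesgue. k t * \<phi> t)" for \<phi>
    unfolding katu_int_def C_def k_def S_def by simp
  have mono: "C * (LINT t:S|lebesgue. k t * \<phi> t powr p) \<le> C * (LINT t:S|lebesgue. k t * Hf (f t) (g t) powr p)"
    "0 \<le> C * (LINT t:S|lebesgue. k t * \<phi> t powr p)"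
    if I\<phi>: "set_integrable lebesgue S (\<lambda>t. k t * \<phi> t powr p)"
      and le: "\<And>t. t \<in> S \<Longrightarrow> 0 \<le> \<phi> t \<and> \<phi> t \<le> Hf (f t) (g t)" for \<phi>
  proof -
    have "(LINT t:S|lebesgue. k t * \<phi> t powr p) \<le> (LINT t:S|lebesgue. k t * Hf (f t) (g t) powr p)"
    proof (rule set_integral_mono[OF I\<phi> Ih])
      fix t assume t: "t \<in> S"
      show "k t * \<phi> t powr p \<le> k t * Hf (f t) (g t) powr p"
        using le[OF t] kpos[OF t] assms(3) by (intro mult_left_mono powr_mono2) auto
    qed
    thus "C * (LINT t:S|lebesgue. k t * \<phi> t powr p) \<le> C * (LINT t:S|lebesgue. k t * Hf (f t) (g t) powr p)"
      using Cpos by simp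
    have "0 \<le> (LINT t:S|lebesgue. k t * \<phi> t powr p)"
      unfolding set_lebesgue_integral_def using kpos by (intro Bochner_Integration.integral_nonneg) (auto simp: indicator_def)
    thus "0 \<le> C * (LINT t:S|lebesgue. k t * \<phi> t powr p)" using Cpos by simp
  qed
  have mf: "C * (LINT t:S|lebesgue. k t * f t powr p) \<le> C * (LINT t:S|lebesgue. k t * Hf (f t) (g t) powr p)"
    "0 \<le> C * (LINT t:S|lebesgue. k t * f t powr p)"
    using mono[OF If] hf(1) pos(1) by (auto simp: less_imp_le)
  have mg: "C * (LINT t:S|lebesgue. k t * g t powr p) \<le> C * (LINT t:S|lebesgue. k t * Hf (f t) (g t) powr p)"
    "0 \<le> C * (LINT t:S|lebesgue. k t * g t powr p)"
    using mono[OF Ig] hf(2) pos(2) by (auto simp: less_imp_le)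
  have p0: "1 / p \<ge> 0" using assms(3) by simp
  have "(C * (LINT t:S|lebesgue. k t * f t powr p)) powr (1/p) \<le> (C * (LINT t:S|lebesgue. k t * Hf (f t) (g t) powr p)) powr (1/p)"
    using mf p0 by (intro powr_mono2) auto
  moreover have "(C * (LINT t:S|lebesgue. k t * g t powr p)) powr (1/p) \<le> (C * (LINT t:S|lebesgue. k t * Hf (f t) (g t) powr p)) powr (1/p)"
    using mg p0 by (intro powr_mono2) auto
  ultimately show ?thesis unfolding Let_def KI Hf_def by simp
qed

end
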